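(* Let $d\ge 3$, let $\mathcal M$ be a model of $\mathrm{PQM}_d$, and let $\varphi(x)$ be an $\mathcal L_d$-formula in the single free variable $x$ which is a finite conjunction of literals, each of the form $[t(x):p]$ or $\neg[t(x):p]$ with $p\in\mathbb H_d$ and $t(x)$ a term obtained from $x$ by applying finitely many function symbols $u_U$, $\pi_q$. If $\mathcal V_d\models\exists x\,\varphi(x)$, then $\mathcal M\models\exists x\,\varphi(x)$.
   Context: Notation. For $d\ge 1$, $\mathbb H_d$ is the set of complex linear subspaces of $\mathbb C^d$, ordered by inclusion $\le$, with $\top=\mathbb C^d$, $\bot=\{0\}$, $p^\bot$ the orthogonal complement, $p\wedge q=p\cap q$ and $p\vee q=p+q$. $\mathbb V_d\subseteq\mathbb H_d$ is the set of one-dimensional subspaces (rays). $\mathbb U_d$ is the set of unitary operators on $\mathbb C^d$, and for $U\in\mathbb U_d$, $p\in\mathbb H_d$, $U(p)=\{Uv: v\in p\}$. The Sasaki projection is $p\,\&\,q := q\cap(q^\bot+p)$. Subspaces $p,q$ are compatible iff $p=(p\wedge q)\vee(p\wedge q^\bot)$. Language $\mathcal L_d$: a first-order language without equality and without constants, having a unary function symbol $u_U$ for each $U\in\mathbb U_d$, a unary function symbol $\pi_q$ for each $q\in\mathbb H_d$, and a unary relation symbol $[\,\cdot:p]$ for each $p\in\mathbb H_d$. Theory $\mathrm{PQM}_d$ (over $\mathcal L_d$) has the following axioms, for all $p,q\in\mathbb H_d$ and $U\in\mathbb U_d$: ($\neg\bot$) $\exists x\,\neg[x:\bot]$; ($\top$)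 $\forall x\,[x:\top]$; ($\le$) if $p\le q$: $\forall x\,([x:p]\to[x:q])$; ($\wedge$) if $p,q$ are compatible: $\forall x\,([x:p]\wedge[x:q]\to[x:p\wedge q])$; ($\pi_i$) $\forall x\,([x:p]\to[\pi_q(x):p\,\&\,q])$; ($\pi_c$) if $p\le q$: $\forall x\,([\pi_p(\pi_q(x)):\bot]\to[\pi_p(x):\bot])$; ($\pi_\bot$) $\forall x\,([\pi_q(x):\bot]\to[x:q^\bot])$; ($u_i$) $\forall x\,([x:p]\to[u_U(x):U(p)])$; ($u_e$) $\forall x\,([u_U(x):p]\to[x:U^{-1}(p)])$. Vector model $\mathcal V_d$: the $\mathcal L_d$-structure with domain $\mathbb V_d\cup\{\bot\}$, $u_U^{\mathcal V_d}(x)=U(x)$, $\pi_q^{\mathcal V_d}(x)=x\,\&\,q$, and $[x:p]^{\mathcal V_d}$ holds iff $x\le p$. *)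

theory Defs
  imports "HOL-Analysis.Analysis"
begin

section \<open>Complex Hilbert space C^d, with d = CARD('n)\<close>

type_synonym 'n cvec = "complex ^ 'n"
type_synonym 'n cmat = "complex ^ 'n ^ 'n"

definition hinner :: "'n::finite cvec \<Rightarrow> 'n cvec \<Rightarrow> complex" where
  "hinner v w = (\<Sum>i\<in>UNIV. v $ i * cnj (w $ i))"

definition csubspace :: "'n::finite cvec set \<Rightarrow> bool" where
  "csubspace S \<longleftrightarrow> 0 \<in> S \<and> (\<forall>v\<in>S. \<forall>w\<in>S. v + w \<in> S) \<and> (\<forall>c. \<forall>v\<in>S. c *s v \<in> S)"

definition HH :: "'n::finite cvec set set" where
  "HH = {S. csubspace S}"

definition ortho :: "'n::finite cvec set \<Rightarrow> 'n cvec set" where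
  "ortho p = {v. \<forall>w\<in>p. hinner v w = 0}"

definition ssum :: "'n::finite cvec set \<Rightarrow> 'n cvec set \<Rightarrow> 'n cvec set" where
  "ssum p q = {a + b | a b. a \<in> p \<and> b \<in> q}"

definition botS :: "'n::finite cvec set" where "botS = {0}"
definition topS :: "'n::finite cvec set" where "topS = UNIV"

definition sasaki :: "'n::finite cvec set \<Rightarrow> 'n cvec set \<Rightarrow> 'n cvec set" where
  "sasaki p q = q \<inter> ssum (ortho q) p"

definition compatible :: "'n::finite cvec set \<Rightarrow> 'n cvec set \<Rightarrow> bool" where
  "compatible p q \<longleftrightarrow> p = ssum (p \<inter> q) (p \<inter> ortho q)"

definition adj :: "'n::finite cmat \<Rightarrow> 'n cmat" where
  "adj U = (\<chi> i j. cnj (U $ j $ i))"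

definition unitary :: "'n::finite cmat \<Rightarrow> bool" where
  "unitary U \<longleftrightarrow> U ** adj U = mat 1 \<and> adj U ** U = mat 1"

definition uimg :: "'n::finite cmat \<Rightarrow> 'n cvec set \<Rightarrow> 'n cvec set" where
  "uimg U p = (\<lambda>v. U *v v) ` p"

definition uinvimg :: "'n::finite cmat \<Rightarrow> 'n cvec set \<Rightarrow> 'n cvec set" where
  "uinvimg U p = {w. U *v w \<in> p}"

datatype ('n::finite) trm = Var | U_app "'n cmat" "'n trm" | Pi_app "'n cvec set" "'n trm"

text \<open>A term is an L_d-term iff all its unitary / projection indices are legal symbols.\<close>
fun wf_trm :: "'n::finite trm \<Rightarrow> bool" where
  "wf_trm Var = True"
| "wf_trm (U_app U t) = (unitary U \<and> wf_trm t)"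
| "wf_trm (Pi_app q t) = (q \<in> HH \<and> wf_trm t)"

text \<open>A literal (b, t, p): [t(x):p] if b, and \<not>[t(x):p] otherwise.\<close>
type_synonym 'n lit = "bool \<times> 'n trm \<times> 'n cvec set"

definition wf_lit :: "('n::finite) lit \<Rightarrow> bool" where
  "wf_lit l = (case l of (b, t, p) \<Rightarrow> wf_trm t \<and> p \<in> HH)"

section \<open>Structures: u (for u_U), prj (for pi_q), rel (for [. : p])\<close>

fun eval :: "('n::finite cmat \<Rightarrow> 'a \<Rightarrow> 'a) \<Rightarrow> ('n cvec set \<Rightarrow> 'a \<Rightarrow> 'a) \<Rightarrow> 'n trm \<Rightarrow> 'a \<Rightarrow> 'a" where
  "eval u prj Var x = x"
| "eval u prj (U_app U t) x = u U (eval u prj t x)"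
| "eval u prj (Pi_app q t) x = prj q (eval u prj t x)"

definition sat_lits :: "('n::finite cmat \<Rightarrow> 'a \<Rightarrow> 'a) \<Rightarrow> ('n cvec set \<Rightarrow> 'a \<Rightarrow> 'a)
    \<Rightarrow> ('n cvec set \<Rightarrow> 'a \<Rightarrow> bool) \<Rightarrow> 'n lit list \<Rightarrow> 'a \<Rightarrow> bool" where
  "sat_lits u prj rel phi x = (\<forall>(b, t, p) \<in> set phi. rel p (eval u prj t x) = b)"

definition PQM_model :: "('n::finite cmat \<Rightarrow> 'a \<Rightarrow> 'a) \<Rightarrow> ('n cvec set \<Rightarrow> 'a \<Rightarrow> 'a)
    \<Rightarrow> ('n cvec set \<Rightarrow> 'a \<Rightarrow> bool) \<Rightarrow> bool" where
  "PQM_model u prj rel \<longleftrightarrow>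
     (\<exists>x. \<not> rel botS x) \<and>
     (\<forall>x. rel topS x) \<and>
     (\<forall>p\<in>HH. \<forall>q\<in>HH. p \<subseteq> q \<longrightarrow> (\<forall>x. rel p x \<longrightarrow> rel q x)) \<and>
     (\<forall>p\<in>HH. \<forall>q\<in>HH. compatible p q \<longrightarrow> (\<forall>x. rel p x \<and> rel q x \<longrightarrow> rel (p \<inter> q) x)) \<and>
     (\<forall>p\<in>HH. \<forall>q\<in>HH. \<forall>x. rel p x \<longrightarrow> rel (sasaki p q) (prj q x)) \<and>
     (\<forall>p\<in>HH. \<forall>q\<in>HH. p \<subseteq> q \<longrightarrow> (\<forall>x. rel botS (prj p (prj q x)) \<longrightarrow> rel botS (prj p x))) \<and>
     (\<forall>q\<in>HH. \<forall>x. rel botS (prj q x) \<longrightarrow> rel (ortho q) x) \<and>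
     (\<forall>p\<in>HH. \<forall>U. unitary U \<longrightarrow> (\<forall>x. rel p x \<longrightarrow> rel (uimg U p) (u U x))) \<and>
     (\<forall>p\<in>HH. \<forall>U. unitary U \<longrightarrow> (\<forall>x. rel p (u U x) \<longrightarrow> rel (uinvimg U p) x))"

text \<open>Domain: rays together with bot, i.e. the complex spans of single vectors.\<close>
definition VV :: "'n::finite cvec set set" where
  "VV = {{c *s v | c. True} | v. True}"

definition V_u :: "'n::finite cmat \<Rightarrow> 'n cvec set \<Rightarrow> 'n cvec set" where
  "V_u U x = uimg U x"

definition V_pi :: "'n::finite cvec set \<Rightarrow> 'n cvec set \<Rightarrow> 'n cvec set" where
  "V_pi q x = sasaki x q"

definition V_rel :: "'n::finite cvec set \<Rightarrow> 'n cvec set \<Rightarrow> bool" where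
  "V_rel p x \<longleftrightarrow> x \<subseteq> p"

end

theory Submission
  imports Defs
begin


lemma hinner_add_left: "hinner (a + b) c = hinner a c + hinner b c"
  by (simp add: hinner_def sum.distrib algebra_simps)
lemma hinner_add_right: "hinner c (a + b) = hinner c a + hinner c b"
  by (simp add: hinner_def sum.distrib algebra_simps)
lemma hinner_diff_left: "hinner (a - b) c = hinner a c - hinner b c"
  by (simp add: hinner_def sum_subtractf algebra_simps)
lemma hinner_diff_right: "hinner c (a - b) = hinner c a - hinner c b"
  by (simp add: hinner_def sum_subtractf algebra_simps)
lemma hinner_scale_left: "hinner (k *s a) c = k * hinner a c"
  by (simp add: hinner_def sum_distrib_left algebra_simps)
lemma hinner_scale_right: "hinner c (k *s a) = cnj k * hinner c a"
  by (simp add: hinner_def sum_distrib_left algebra_simps)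
lemma hinner_sym: "hinner b a = cnj (hinner a b)"
  by (simp add: hinner_def mult.commute)
lemma hinner_zero_left[simp]: "hinner 0 a = 0" by (simp add: hinner_def)
lemma hinner_zero_right[simp]: "hinner a 0 = 0" by (simp add: hinner_def)
lemma hinner_neg_left: "hinner (- a) c = - hinner a c"
  by (simp add: hinner_def sum_negf)
lemma hinner_neg_right: "hinner c (- a) = - hinner c a"
  by (simp add: hinner_def sum_negf)

lemmas hinner_simps = hinner_add_left hinner_add_right hinner_diff_left hinner_diff_right
  hinner_scale_left hinner_scale_right hinner_neg_left hinner_neg_right

lemma hinner_self_real: "hinner a a = of_real (norm a ^ 2)"
proof -
  have "hinner a a = (\<Sum>i\<in>UNIV. of_real ((cmod (a$i))^2))"
    unfolding hinner_def
  proof (rule sum.cong[OF refl])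
    fix i show "a$i * cnj (a$i) = of_real ((cmod (a$i))^2)"
      using complex_norm_square[of "a$i"] by simp
  qed
  also have "\<dots> = of_real (\<Sum>i\<in>UNIV. (cmod (a$i))^2)" by simp
  also have "(\<Sum>i\<in>UNIV. (cmod (a$i))^2) = norm a ^ 2"
    by (simp add: norm_vec_def L2_set_def sum_nonneg)
  finally show ?thesis .
qed

lemma hinner_self_eq_0: "hinner a a = 0 \<longleftrightarrow> a = 0"
  by (simp add: hinner_self_real)

lemma inner_hinner: "inner x y = Re (hinner x y)"
  by (simp add: inner_vec_def hinner_def inner_complex_def Re_sum)

lemma inner_hinner_ii: "inner x (\<i> *s y) = Im (hinner x y)"
  by (simp add: inner_vec_def hinner_def inner_complex_def Im_sum algebra_simps)

lemma hinner_eq_0_iff: "hinner x y = 0 \<longleftrightarrow> inner x y = 0 \<and> inner x (\<i> *s y) = 0"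
  unfolding inner_hinner_ii by (simp add: inner_hinner complex_eq_iff)

lemma scaleR_vec_eq: "(r::real) *\<^sub>R (v::'n::finite cvec) = complex_of_real r *s v"
proof -
  have "\<And>i. (r *\<^sub>R v) $ i = complex_of_real r * v $ i"
    by (metis scaleR_conv_of_real vector_scaleR_component)
  then show ?thesis by (simp add: vec_eq_iff)
qed


definition lsp :: "'n::finite cvec \<Rightarrow> 'n cvec set" where
  "lsp v = {c *s v | c. True}"

lemma csubspace_lsp: "csubspace (lsp v)"
  unfolding csubspace_def lsp_def
proof (intro conjI ballI allI)
  show "0 \<in> {c *s v |c. True}" by (rule CollectI, rule exI[of _ 0]) simp
next
  fix a b assume "a \<in> {c *s v |c. True}" "b \<in> {c *s v |c. True}"
  then obtain c d where "a = c *s v" "b = d *s v" by blast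
  then show "a + b \<in> {c *s v |c. True}" by (intro CollectI exI[of _ "c + d"]) (simp add: vector_sadd_rdistrib)
next
  fix k a assume "a \<in> {c *s v |c. True}"
  then obtain c where "a = c *s v" by blast
  then show "k *s a \<in> {c *s v |c. True}" by (intro CollectI exI[of _ "k * c"]) (simp add: vector_smult_assoc)
qed

lemma lsp_HH[simp]: "lsp v \<in> HH" by (simp add: HH_def csubspace_lsp)

lemma lsp_self: "v \<in> lsp v"
  unfolding lsp_def by (auto intro: exI[of _ 1])

lemma lsp_zero: "lsp 0 = botS"
  unfolding lsp_def botS_def by auto

lemma lsp_scale: "k \<noteq> 0 \<Longrightarrow> lsp (k *s v) = lsp v"
proof
  assume k: "k \<noteq> 0"
  show "lsp (k *s v) \<subseteq> lsp v" unfolding lsp_def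
    by (auto simp: vector_smult_assoc)
  show "lsp v \<subseteq> lsp (k *s v)" unfolding lsp_def
  proof safe
    fix c show "\<exists>d. c *s v = d *s (k *s v) \<and> True"
      using k by (intro exI[of _ "c / k"]) (simp add: vector_smult_assoc)
  qed
qed

lemma csubspace_ortho: "csubspace (ortho S)"
  unfolding csubspace_def ortho_def by (auto simp: hinner_simps)

lemma csubspace_inter: "csubspace p \<Longrightarrow> csubspace q \<Longrightarrow> csubspace (p \<inter> q)"
  unfolding csubspace_def by auto

lemma csubspace_ssum: "csubspace p \<Longrightarrow> csubspace q \<Longrightarrow> csubspace (ssum p q)"
  unfolding csubspace_def ssum_def
proof (elim conjE, intro conjI ballI allI)
  assume p: "0 \<in> p" "\<forall>v\<in>p. \<forall>w\<in>p. v + w \<in> p" "\<forall>c. \<forall>v\<in>p. c *s v \<in> p"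
    and q: "0 \<in> q" "\<forall>v\<in>q. \<forall>w\<in>q. v + w \<in> q" "\<forall>c. \<forall>v\<in>q. c *s v \<in> q"
  show "0 \<in> {a + b |a b. a \<in> p \<and> b \<in> q}" using p q by force
  fix x y assume "x \<in> {a + b |a b. a \<in> p \<and> b \<in> q}" "y \<in> {a + b |a b. a \<in> p \<and> b \<in> q}"
  then obtain a b a' b' where "x = a + b" "y = a' + b'" "a \<in> p" "b \<in> q" "a' \<in> p" "b' \<in> q" by blast
  then show "x + y \<in> {a + b |a b. a \<in> p \<and> b \<in> q}" using p q
    by (intro CollectI exI[of _ "a + a'"] exI[of _ "b + b'"]) (simp add: algebra_simps)
next
  fix c x
  assume p: "\<forall>c. \<forall>v\<in>p. c *s v \<in> p" and q: "\<forall>c. \<forall>v\<in>q. c *s v \<in> q"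
    and "x \<in> {a + b |a b. a \<in> p \<and> b \<in> q}"
  then obtain a b where "x = a + b" "a \<in> p" "b \<in> q" by blast
  then show "c *s x \<in> {a + b |a b. a \<in> p \<and> b \<in> q}" using p q
    by (intro CollectI exI[of _ "c *s a"] exI[of _ "c *s b"]) (simp add: vector_add_ldistrib)
qed

lemma HH_sasaki: "p \<in> HH \<Longrightarrow> q \<in> HH \<Longrightarrow> sasaki p q \<in> HH"
  unfolding HH_def sasaki_def by (simp add: csubspace_inter csubspace_ssum csubspace_ortho)

lemma HH_ortho[simp]: "ortho S \<in> HH" by (simp add: HH_def csubspace_ortho)
lemma HH_inter: "p \<in> HH \<Longrightarrow> q \<in> HH \<Longrightarrow> p \<inter> q \<in> HH"
  by (simp add: HH_def csubspace_inter)
lemma HH_bot[simp]: "botS \<in> HH" unfolding HH_def csubspace_def botS_def by auto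
lemma HH_top[simp]: "topS \<in> HH" unfolding HH_def csubspace_def topS_def by auto

lemma csubspace_0: "csubspace p \<Longrightarrow> 0 \<in> p" by (simp add: csubspace_def)
lemma csubspace_add: "csubspace p \<Longrightarrow> a \<in> p \<Longrightarrow> b \<in> p \<Longrightarrow> a + b \<in> p" by (simp add: csubspace_def)
lemma csubspace_scale: "csubspace p \<Longrightarrow> a \<in> p \<Longrightarrow> c *s a \<in> p" by (simp add: csubspace_def)
lemma csubspace_neg: "csubspace p \<Longrightarrow> a \<in> p \<Longrightarrow> - a \<in> p"
  using csubspace_scale[of p a "-1"] by simp
lemma csubspace_diff: "csubspace p \<Longrightarrow> a \<in> p \<Longrightarrow> b \<in> p \<Longrightarrow> a - b \<in> p"
  using csubspace_add[of p a "- b"] csubspace_neg[of p b] by simp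

lemma csubspace_real: "csubspace p \<Longrightarrow> subspace p"
  unfolding subspace_def by (auto simp: scaleR_vec_eq csubspace_def)

lemma decomp:
  assumes "csubspace p"
  obtains y z where "y \<in> p" "\<And>w. w \<in> p \<Longrightarrow> hinner z w = 0" "v = y + z"
proof -
  have sp: "span p = p" using csubspace_real[OF assms] by (simp add: span_eq_iff)
  obtain y z where "y \<in> span p" "\<And>w. w \<in> span p \<Longrightarrow> orthogonal z w" "v = y + z"
    using orthogonal_subspace_decomp_exists by blast
  moreover have "hinner z w = 0" if "w \<in> p" for w
  proof -
    have "\<i> *s w \<in> p" using csubspace_scale[OF assms that] .
    then show ?thesis using that calculation(2) sp by (simp add: hinner_eq_0_iff orthogonal_def)
  qed
  ultimately show ?thesis using that sp by auto
qed

lemma exists_orth: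
  assumes "CARD('n::finite) \<ge> 3"
  shows "\<exists>x::'n cvec. x \<noteq> 0 \<and> hinner x a = 0 \<and> hinner x b = 0"
proof -
  let ?S = "{a, \<i> *s a, b, \<i> *s b}"
  have "dim ?S \<le> card ?S" by (rule dim_le_card) (auto intro: span_base)
  also have "card ?S \<le> 4"
    using card_length[of "[a, \<i> *s a, b, \<i> *s b]"] by simp
  finally have "dim ?S < DIM('n cvec)" using assms by simp
  then obtain x where "x \<noteq> 0" "\<And>y. y \<in> span ?S \<Longrightarrow> orthogonal x y"
    using orthogonal_to_subspace_exists by blast
  then show ?thesis by (auto simp: hinner_eq_0_iff orthogonal_def intro!: exI[of _ x] span_base)
qed


lemma ortho_lsp: "ortho (lsp f) = {v. hinner v f = 0}"
proof
  show "ortho (lsp f) \<subseteq> {v. hinner v f = 0}" unfolding ortho_def using lsp_self by blast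
  show "{v. hinner v f = 0} \<subseteq> ortho (lsp f)" unfolding ortho_def lsp_def
    by (auto simp: hinner_scale_right)
qed

lemma lsp_sub_ssum: "lsp w \<subseteq> ssum (lsp w) (lsp f)"
  unfolding ssum_def using csubspace_0[OF csubspace_lsp[of f]] by force

lemma lsp_subset: "csubspace p \<Longrightarrow> w \<in> p \<Longrightarrow> lsp w \<subseteq> p"
  unfolding lsp_def using csubspace_scale by blast

locale pqm =
  fixes u :: "'n::finite cmat \<Rightarrow> 'a \<Rightarrow> 'a"
    and prj :: "'n cvec set \<Rightarrow> 'a \<Rightarrow> 'a"
    and rel :: "'n cvec set \<Rightarrow> 'a \<Rightarrow> bool"
  assumes M: "PQM_model u prj rel"
begin

lemmas ax1 = M[unfolded PQM_model_def, THEN conjunct1]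
lemmas ax2 = M[unfolded PQM_model_def, THEN conjunct2, THEN conjunct1]
lemmas ax3 = M[unfolded PQM_model_def, THEN conjunct2, THEN conjunct2, THEN conjunct1]
lemmas ax4 = M[unfolded PQM_model_def, THEN conjunct2, THEN conjunct2, THEN conjunct2, THEN conjunct1]
lemmas ax5 = M[unfolded PQM_model_def, THEN conjunct2, THEN conjunct2, THEN conjunct2, THEN conjunct2, THEN conjunct1]
lemmas ax6 = M[unfolded PQM_model_def, THEN conjunct2, THEN conjunct2, THEN conjunct2, THEN conjunct2, THEN conjunct2, THEN conjunct1]
lemmas ax7 = M[unfolded PQM_model_def, THEN conjunct2, THEN conjunct2, THEN conjunct2, THEN conjunct2, THEN conjunct2, THEN conjunct2, THEN conjunct1]
lemmas ax8 = M[unfolded PQM_model_def, THEN conjunct2, THEN conjunct2, THEN conjunct2, THEN conjunct2, THEN conjunct2, THEN conjunct2, THEN conjunct2, THEN conjunct1]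
lemmas ax9 = M[unfolded PQM_model_def, THEN conjunct2, THEN conjunct2, THEN conjunct2, THEN conjunct2, THEN conjunct2, THEN conjunct2, THEN conjunct2, THEN conjunct2]

lemma ex_nonbot: "\<exists>x. \<not> rel botS x" by (rule ax1)
lemma top: "rel topS x" using ax2 by blast
lemma up: "p \<in> HH \<Longrightarrow> q \<in> HH \<Longrightarrow> p \<subseteq> q \<Longrightarrow> rel p x \<Longrightarrow> rel q x"
  using ax3 by blast
lemma meet: "p \<in> HH \<Longrightarrow> q \<in> HH \<Longrightarrow> compatible p q \<Longrightarrow> rel p x \<Longrightarrow> rel q x \<Longrightarrow> rel (p \<inter> q) x"
  using ax4 by blast
lemma pi_i: "p \<in> HH \<Longrightarrow> q \<in> HH \<Longrightarrow> rel p x \<Longrightarrow> rel (sasaki p q) (prj q x)"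
  using ax5 by blast
lemma pi_bot: "q \<in> HH \<Longrightarrow> rel botS (prj q x) \<Longrightarrow> rel (ortho q) x"
  using ax7 by blast
lemma u_i: "p \<in> HH \<Longrightarrow> unitary U \<Longrightarrow> rel p x \<Longrightarrow> rel (uimg U p) (u U x)"
  using ax8 by blast
lemma u_e: "p \<in> HH \<Longrightarrow> unitary U \<Longrightarrow> rel p (u U x) \<Longrightarrow> rel (uinvimg U p) x"
  using ax9 by blast

lemma bot_all: "rel botS x \<Longrightarrow> p \<in> HH \<Longrightarrow> rel p x"
  by (erule up[rotated 3]) (auto simp: HH_def botS_def csubspace_def)

lemma orth_bot:
  assumes "rel (lsp a) x" "rel (lsp b) x" "hinner a b = 0"
  shows "rel botS x"
proof -
  have c: "compatible (lsp a) (lsp b)"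
    unfolding compatible_def
  proof
    show "lsp a \<subseteq> ssum (lsp a \<inter> lsp b) (lsp a \<inter> ortho (lsp b))"
    proof
      fix v assume v: "v \<in> lsp a"
      have "0 \<in> lsp a \<inter> lsp b" using csubspace_0[OF csubspace_lsp] by blast
      moreover have "v \<in> ortho (lsp b)"
      proof -
        obtain c where "v = c *s a" using v unfolding lsp_def by blast
        then show ?thesis using assms(3) by (simp add: ortho_lsp hinner_scale_left)
      qed
      ultimately show "v \<in> ssum (lsp a \<inter> lsp b) (lsp a \<inter> ortho (lsp b))"
        unfolding ssum_def using v by force
    qed
    show "ssum (lsp a \<inter> lsp b) (lsp a \<inter> ortho (lsp b)) \<subseteq> lsp a"
      unfolding ssum_def using csubspace_add[OF csubspace_lsp] by blast
  qed
  have "rel (lsp a \<inter> lsp b) x" by (rule meet[OF _ _ c assms(1,2)]) auto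
  moreover have "lsp a \<inter> lsp b \<subseteq> botS"
  proof
    fix v assume "v \<in> lsp a \<inter> lsp b"
    then obtain c d where v: "v = c *s a" "v = d *s b" unfolding lsp_def by blast
    have "hinner v b = 0" using v(1) assms(3) by (simp add: hinner_scale_left)
    hence "d * hinner b b = 0" using v(2) by (simp add: hinner_scale_left)
    hence "d = 0 \<or> b = 0" by (simp add: hinner_self_eq_0)
    then show "v \<in> botS" using v(2) by (auto simp: botS_def)
  qed
  ultimately show ?thesis using up[of "lsp a \<inter> lsp b" botS x] HH_inter[OF lsp_HH[of a] lsp_HH[of b]] by simp
qed

lemma rule':
  assumes P: "rel (ortho (lsp f)) x" and W: "rel (lsp w) x" and ff: "hinner f f \<noteq> 0"
  shows "rel (lsp (hinner f f *s w - hinner w f *s f)) x"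
proof -
  define w' where "w' = hinner f f *s w - hinner w f *s f"
  define P where "P = ortho (lsp f)"
  define Q where "Q = ssum (lsp w) (lsp f)"
  have PH: "P \<in> HH" "csubspace P" unfolding P_def by (auto simp: csubspace_ortho)
  have QH: "Q \<in> HH" "csubspace Q" unfolding Q_def HH_def by (auto intro: csubspace_ssum csubspace_lsp)
  have w'f: "hinner w' f = 0" unfolding w'_def by (simp add: hinner_simps)
  have Pm: "v \<in> P \<longleftrightarrow> hinner v f = 0" for v unfolding P_def ortho_lsp by simp
  have Qm: "v \<in> Q \<longleftrightarrow> (\<exists>c d. v = c *s w + d *s f)" for v
    unfolding Q_def ssum_def lsp_def by blast
  have orthQ: "r \<in> ortho Q" if "hinner r w = 0" "hinner r f = 0" for r
    unfolding ortho_def using that by (auto simp: Qm hinner_simps)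
  have comp: "compatible P Q"
    unfolding compatible_def
  proof
    show "ssum (P \<inter> Q) (P \<inter> ortho Q) \<subseteq> P"
      unfolding ssum_def using csubspace_add[OF PH(2)] by blast
    show "P \<subseteq> ssum (P \<inter> Q) (P \<inter> ortho Q)"
    proof
      fix v assume v: "v \<in> P"
      define \<alpha> where "\<alpha> = hinner v w' / hinner w' w'"
      define r where "r = v - \<alpha> *s w'"
      have rf: "hinner r f = 0" using v w'f unfolding r_def by (simp add: hinner_simps Pm)
      have rw': "hinner r w' = 0"
      proof (cases "w' = 0")
        case True then show ?thesis unfolding r_def by simp
      next
        case False then show ?thesis unfolding r_def \<alpha>_def by (simp add: hinner_simps hinner_self_eq_0)
      qed
      have "hinner r (hinner f f *s w) = hinner r w' + hinner r (hinner w f *s f)"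
        unfolding w'_def by (simp add: hinner_simps)
      also have "\<dots> = 0" using rw' rf by (simp add: hinner_simps)
      finally have rw: "hinner r w = 0" using ff by (simp add: hinner_simps)
      have "\<alpha> *s w' \<in> P" using w'f by (simp add: Pm hinner_simps)
      moreover have "\<alpha> *s w' \<in> Q" unfolding Qm w'_def
        by (rule exI[of _ "\<alpha> * hinner f f"], rule exI[of _ "- \<alpha> * hinner w f"])
           (simp add: vec_eq_iff algebra_simps)
      moreover have "r \<in> P" using rf by (simp add: Pm)
      moreover have "r \<in> ortho Q" using orthQ rw rf by blast
      moreover have "v = \<alpha> *s w' + r" unfolding r_def by simp
      ultimately show "v \<in> ssum (P \<inter> Q) (P \<inter> ortho Q)" unfolding ssum_def by blast
    qed
  qed
  have "rel Q x" using up[OF _ QH(1) _ W] lsp_sub_ssum unfolding Q_def by auto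
  then have "rel (P \<inter> Q) x" using meet[OF PH(1) QH(1) comp] assms(1) unfolding P_def by blast
  moreover have "P \<inter> Q \<subseteq> lsp w'"
  proof
    fix v assume "v \<in> P \<inter> Q"
    then obtain c d where v: "v = c *s w + d *s f" "hinner v f = 0" by (auto simp: Pm Qm)
    then have "c * hinner w f + d * hinner f f = 0" by (simp add: hinner_simps)
    then have "d * hinner f f = - (c * hinner w f)" by (simp add: eq_neg_iff_add_eq_0 add.commute)
    moreover have "d = (d * hinner f f) / hinner f f" using ff by simp
    ultimately have d: "d = - c * hinner w f / hinner f f" by simp
    have "v = (c / hinner f f) *s w'" unfolding w'_def v(1) d using ff
      by (simp add: vec_eq_iff field_simps)
    then show "v \<in> lsp w'" unfolding lsp_def by blast
  qed
  ultimately show ?thesis unfolding w'_def[symmetric]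
    using up[of "P \<inter> Q" "lsp w'" x] HH_inter[OF PH(1) QH(1)] by simp
qed

lemma rule:
  assumes "rel (lsp a) x" "rel (lsp w) x" "hinner a f = 0" "hinner f f \<noteq> 0"
  shows "rel (lsp (hinner f f *s w - hinner w f *s f)) x"
proof -
  have "lsp a \<subseteq> ortho (lsp f)" using assms(3) unfolding ortho_lsp
    by (auto simp: hinner_scale_left lsp_def)
  then have "rel (ortho (lsp f)) x" using up[OF _ _ _ assms(1)] by auto
  then show ?thesis using rule' assms(2,4) by blast
qed

end



lemma cc1: "c * cnj c = complex_of_real (cmod c ^ 2)"
  using complex_norm_square[of c] by simp
lemma cc2: "cnj c * c = complex_of_real (cmod c ^ 2)"
  using complex_norm_square[of c] by (simp add: mult.commute)

lemma cc3: "c * (cnj c * X) = complex_of_real (cmod c ^ 2) * X"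
  by (simp add: cc1 flip: mult.assoc)

lemma Re_hself: "Re (hinner v v) = norm v ^ 2" by (simp add: hinner_self_real)
lemma hself: "hinner v v = complex_of_real (Re (hinner v v))"
  by (simp add: hinner_self_real)

definition Tv :: "'n::finite cvec \<Rightarrow> 'n cvec \<Rightarrow> real" where
  "Tv U W = (Re (hinner W W) * Re (hinner U U) - cmod (hinner W U) ^ 2) / cmod (hinner W U) ^ 2"

lemma aux1: "(a::complex) \<noteq> 0 \<Longrightarrow> X - (H/a) * cH - (cH/a) * H + (H/a)*(cH/a)*a = X - H*cH/a"
  by (simp add: field_simps)

lemma aux2: "(a::real) > 0 \<Longrightarrow> h > 0 \<Longrightarrow> X - h/a = ((X*a - h)/h) * ((h/a^2) * a)"
  by (simp add: field_simps power2_eq_square)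

lemma nf:
  fixes U W :: "'n::finite cvec"
  assumes "U \<noteq> 0" "hinner W U \<noteq> 0"
  obtains c wp where "W = c *s U + wp" "hinner wp U = 0"
    "Re (hinner wp wp) = Tv U W * (cmod c ^ 2 * Re (hinner U U))" "c \<noteq> 0"
proof -
  define a where "a = Re (hinner U U)"
  have a: "a > 0" unfolding a_def Re_hself using assms(1) by simp
  have A: "hinner U U = of_real a" unfolding a_def by (rule hself)
  define H where "H = hinner W U"
  define c where "c = H / of_real a"
  define wp where "wp = W - c *s U"
  have UW: "hinner U W = cnj H" unfolding H_def by (rule hinner_sym)
  have e1: "W = c *s U + wp" unfolding wp_def by simp
  have e2: "hinner wp U = 0" unfolding wp_def c_def H_def using a A by (simp add: hinner_simps)
  have "hinner wp wp = hinner W W - c * cnj H - cnj c * H + c * cnj c * of_real a"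
    unfolding wp_def by (simp add: hinner_simps A UW H_def algebra_simps)
  also have "\<dots> = hinner W W - H * cnj H / of_real a"
  proof -
    have "cnj c = cnj H / of_real a" unfolding c_def by simp
    then show ?thesis unfolding c_def using aux1[of "of_real a" "hinner W W" H "cnj H"] a by simp
  qed
  finally have "Re (hinner wp wp) = Re (hinner W W) - cmod H ^ 2 / a"
    by (simp add: cc1 flip: of_real_divide)
  also have "\<dots> = Tv U W * (cmod c ^ 2 * Re (hinner U U))"
  proof -
    have h: "cmod H ^ 2 > 0" using assms(2) unfolding H_def by simp
    have "cmod c ^ 2 = cmod H ^ 2 / a ^ 2" unfolding c_def using a by (simp add: norm_divide power_divide)
    then show ?thesis unfolding Tv_def H_def[symmetric] a_def[symmetric] using aux2[OF a h] by simp
  qed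
  finally have e3: "Re (hinner wp wp) = Tv U W * (cmod c ^ 2 * Re (hinner U U))" .
  have "c \<noteq> 0" unfolding c_def H_def using assms(2) a by simp
  then show ?thesis using that e1 e2 e3 by blast
qed

definition ovec :: "complex \<Rightarrow> 'n::finite cvec \<Rightarrow> 'n cvec \<Rightarrow> 'n cvec \<Rightarrow> real \<Rightarrow> 'n cvec" where
  "ovec c u wp n l = (of_real (1 + l^2) * c) *s u + of_real (l^2) *s wp - of_real l *s n"

lemma ovec_inner:
  fixes u wp n :: "'n::finite cvec"
  assumes o: "hinner wp u = 0" "hinner n u = 0" "hinner n wp = 0"
    and A: "hinner u u = of_real a" and D: "hinner wp wp = of_real d" "hinner n n = of_real d"
  shows "hinner (ovec c u wp n l) (ovec c u wp n l') =
     of_real ((1 + l^2) * (1 + l'^2) * cmod c ^ 2 * a + l^2 * l'^2 * d + l * l' * d)"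
proof -
  have o2: "hinner u wp = 0" "hinner u n = 0" "hinner wp n = 0"
    using o by (metis hinner_sym complex_cnj_zero)+
  show ?thesis using o o2 A D unfolding ovec_def
    by (simp add: hinner_simps algebra_simps cc3)
qed

context pqm
begin

lemma out_rule:
  fixes b wp n :: "'n cvec"
  assumes r1: "rel (lsp b) x" and r2: "rel (lsp (c *s b + wp)) x"
    and o: "hinner wp b = 0" "hinner n b = 0" "hinner n wp = 0"
    and D: "hinner wp wp = of_real d" "hinner n n = of_real d" and d: "d \<noteq> 0"
  shows "rel (lsp (ovec c b wp n l)) x"
proof -
  have o2: "hinner b wp = 0" "hinner b n = 0" "hinner wp n = 0"
    using o by (metis hinner_sym complex_cnj_zero)+
  define f where "f = wp + of_real l *s n"
  define w where "w = c *s b + wp"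
  have uf: "hinner b f = 0" unfolding f_def using o2 by (simp add: hinner_simps)
  have ff: "hinner f f = of_real ((1 + l^2) * d)" unfolding f_def using o o2 D
    by (simp add: hinner_simps algebra_simps power2_eq_square)
  have wf: "hinner w f = of_real d" unfolding f_def w_def using o o2 D
    by (simp add: hinner_simps algebra_simps)
  have ffn: "hinner f f \<noteq> 0"
  proof -
    have "1 + l^2 > 0" by (smt (verit) zero_le_power2)
    then have "(1 + l^2) * d \<noteq> 0" using d by simp
    then show ?thesis unfolding ff using of_real_eq_0_iff by blast
  qed
  have "rel (lsp (hinner f f *s w - hinner w f *s f)) x"
    using rule[OF r1 r2[folded w_def] uf ffn] .
  moreover have "hinner f f *s w - hinner w f *s f = of_real d *s ovec c b wp n l"
    unfolding ff wf unfolding f_def w_def ovec_def by (simp add: vec_eq_iff algebra_simps)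
  ultimately have "rel (lsp (of_real d *s ovec c b wp n l)) x" by simp
  moreover have "lsp (of_real d *s ovec c b wp n l) = lsp (ovec c b wp n l)"
    using lsp_scale[of "of_real d" "ovec c b wp n l"] d by simp
  ultimately show ?thesis by simp
qed


lemma prep:
  assumes card: "CARD('n) \<ge> 3" and r: "rel (lsp U) x" "rel (lsp W) x"
    and s: "Tv U W = s" "s > 0"
  obtains c wp n a d where
    "\<And>l. rel (lsp (ovec c U wp n l)) x"
    "\<And>l l'. hinner (ovec c U wp n l) (ovec c U wp n l') =
     of_real ((1 + l^2) * (1 + l'^2) * cmod c ^ 2 * a + l^2 * l'^2 * d + l * l' * d)"
    "a > 0" "cmod c ^ 2 > 0" "d = s * (cmod c ^ 2 * a)"
proof -
  have H: "hinner W U \<noteq> 0" using s unfolding Tv_def by auto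
  have U0: "U \<noteq> 0" using H by auto
  obtain c wp where nf1: "W = c *s U + wp" "hinner wp U = 0"
    "Re (hinner wp wp) = Tv U W * (cmod c ^ 2 * Re (hinner U U))" "c \<noteq> 0"
    using nf[OF U0 H] by blast
  define a where "a = Re (hinner U U)"
  have a: "a > 0" unfolding a_def Re_hself using U0 by simp
  have A: "hinner U U = of_real a" unfolding a_def by (rule hself)
  define d where "d = Re (hinner wp wp)"
  have D: "hinner wp wp = of_real d" unfolding d_def by (rule hself)
  have k: "cmod c ^ 2 > 0" using nf1(4) by simp
  have dd: "d = s * (cmod c ^ 2 * a)" unfolding d_def a_def using nf1(3) s(1) by simp
  have d0: "d > 0" using dd k a s(2) by simp
  obtain n0 :: "'n cvec" where n0: "n0 \<noteq> 0" "hinner n0 U = 0" "hinner n0 wp = 0"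
    using exists_orth[OF card] by blast
  define e where "e = Re (hinner n0 n0)"
  have e: "e > 0" unfolding e_def Re_hself using n0 by simp
  have E: "hinner n0 n0 = of_real e" unfolding e_def by (rule hself)
  define r where "r = sqrt (d / e)"
  have r2: "r * r = d / e" unfolding r_def using d0 e by simp
  define n where "n = of_real r *s n0"
  have nU: "hinner n U = 0" "hinner n wp = 0" unfolding n_def using n0 by (simp_all add: hinner_simps)
  have "hinner n n = of_real (r * r * e)" unfolding n_def using E by (simp add: hinner_simps)
  also have "r * r * e = d" using r2 e by simp
  finally have N: "hinner n n = of_real d" .
  have r2': "rel (lsp (c *s U + wp)) x" using r(2) nf1(1) by simp
  have ones: "rel (lsp (ovec c U wp n l)) x" for l
    by (rule out_rule[OF r(1) r2' nf1(2) nU D N]) (use d0 in simp)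
  have inn: "hinner (ovec c U wp n l) (ovec c U wp n l') =
     of_real ((1 + l^2) * (1 + l'^2) * cmod c ^ 2 * a + l^2 * l'^2 * d + l * l' * d)" for l l'
    by (rule ovec_inner[OF nf1(2) nU A D N])
  show ?thesis using that ones inn a k dd by blast
qed

lemma step:
  assumes card: "CARD('n) \<ge> 3" and r: "rel (lsp U) x" "rel (lsp W) x"
    and s: "Tv U W = s" "s > 0"
  shows "\<exists>U' W'. rel (lsp U') x \<and> rel (lsp W') x \<and> Tv U' W' = s + s^2/4"
proof -
  obtain c wp n a d where o: "\<And>l. rel (lsp (ovec c U wp n l)) x"
    and inn: "\<And>l l'. hinner (ovec c U wp n l) (ovec c U wp n l') =
     of_real ((1 + l^2) * (1 + l'^2) * cmod c ^ 2 * a + l^2 * l'^2 * d + l * l' * d)"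
    and a: "a > 0" and k: "cmod c ^ 2 > 0" and dd: "d = s * (cmod c ^ 2 * a)"
    using prep[OF card r s] by blast
  define K where "K = cmod c ^ 2 * a"
  have K: "K > 0" unfolding K_def using a k by simp
  have i11: "hinner (ovec c U wp n 1) (ovec c U wp n 1) = of_real (4 * K + 2 * d)"
    unfolding inn K_def by simp
  have i22: "hinner (ovec c U wp n (-1)) (ovec c U wp n (-1)) = of_real (4 * K + 2 * d)"
    unfolding inn K_def by simp
  have i21: "hinner (ovec c U wp n (-1)) (ovec c U wp n 1) = of_real (4 * K)"
    unfolding inn K_def by simp
  have "Tv (ovec c U wp n 1) (ovec c U wp n (-1)) = ((4 * K + 2 * d) * (4 * K + 2 * d) - (4 * K)^2) / (4 * K)^2"
    unfolding Tv_def i11 i22 i21 using K by (simp add: abs_of_pos)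
  also have "\<dots> = s + s^2/4" unfolding dd K_def[symmetric] using K
    by (simp add: field_simps power2_eq_square)
  finally show ?thesis using o by blast
qed

lemma final:
  assumes card: "CARD('n) \<ge> 3" and r: "rel (lsp U) x" "rel (lsp W) x"
    and s: "Tv U W = s" "s \<ge> 10"
  shows "rel botS x"
proof -
  have s0: "s > 0" using s(2) by simp
  obtain c wp n a d where o: "\<And>l. rel (lsp (ovec c U wp n l)) x"
    and inn: "\<And>l l'. hinner (ovec c U wp n l) (ovec c U wp n l') =
     of_real ((1 + l^2) * (1 + l'^2) * cmod c ^ 2 * a + l^2 * l'^2 * d + l * l' * d)"
    and a: "a > 0" and k: "cmod c ^ 2 > 0" and dd: "d = s * (cmod c ^ 2 * a)"
    using prep[OF card r s(1) s0] by blast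
  define K where "K = cmod c ^ 2 * a"
  define q where "q = sqrt (s^2 - 8 * s - 16)"
  have "(6::real)^2 \<le> (s - 4)^2" by (rule power_mono) (use s(2) in simp_all)
  then have nn: "s^2 - 8 * s - 16 \<ge> 0" by (simp add: power2_eq_square algebra_simps)
  have q2: "q * q = s^2 - 8 * s - 16" unfolding q_def using nn
    by (metis power2_eq_square real_sqrt_pow2)
  define p where "p = (q - s) / (2 * (s + 2))"
  have pq: "(s + 2) * p^2 + s * p + 2 = 0"
  proof -
    have pD: "p * (2 * (s + 2)) = q - s" unfolding p_def using s(2) by simp
    have "4 * (s + 2) * ((s + 2) * p^2 + s * p + 2) = (p * (2 * (s + 2)))^2 + 2 * s * (p * (2 * (s + 2))) + 8 * (s + 2)"
      by (simp add: algebra_simps power2_eq_square)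
    also have "\<dots> = (q - s)^2 + 2 * s * (q - s) + 8 * (s + 2)" unfolding pD ..
    also have "\<dots> = 0" using q2 by (simp add: power2_eq_square algebra_simps)
    finally show ?thesis using s(2) by simp
  qed
  have "hinner (ovec c U wp n 1) (ovec c U wp n p) = of_real (K * ((s + 2) * p^2 + s * p + 2))"
    unfolding inn dd K_def by (simp add: algebra_simps power2_eq_square)
  also have "\<dots> = 0" using pq by simp
  finally show ?thesis using orth_bot[OF o o] by blast
qed


lemma iter:
  assumes card: "CARD('n) \<ge> 3" and r: "rel (lsp U) x" "rel (lsp W) x"
    and s: "Tv U W = s0" "s0 > 0"
  shows "\<exists>U' W'. rel (lsp U') x \<and> rel (lsp W') x \<and> Tv U' W' \<ge> s0 + real N * s0^2/4"
proof (induction N)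
  case 0
  then show ?case using r s by auto
next
  case (Suc N)
  then obtain U' W' where r': "rel (lsp U') x" "rel (lsp W') x"
    and t: "Tv U' W' \<ge> s0 + real N * s0^2/4" by blast
  define t where "t = Tv U' W'"
  have "real N * s0^2/4 \<ge> 0" by simp
  then have ts0: "t \<ge> s0" using t unfolding t_def by linarith
  then have tp: "t > 0" using s(2) by simp
  obtain U'' W'' where r'': "rel (lsp U'') x" "rel (lsp W'') x" and e: "Tv U'' W'' = t + t^2/4"
    using step[OF card r' t_def[symmetric] tp] by blast
  have "s0^2 \<le> t^2" using ts0 s(2) by (simp add: power_mono)
  moreover have "s0 + real (Suc N) * s0^2/4 = (s0 + real N * s0^2/4) + s0^2/4"
    by (simp add: algebra_simps add_divide_distrib)
  ultimately have "t + t^2/4 \<ge> s0 + real (Suc N) * s0^2/4" using t unfolding t_def[symmetric]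
    by linarith
  then show ?case using r'' e by metis
qed

lemma KS:
  assumes card: "CARD('n) \<ge> 3" and nb: "\<not> rel botS x"
    and r: "rel (lsp U) x" "rel (lsp W) x"
  shows "lsp U = lsp W"
proof -
  have U0: "U \<noteq> 0" using r(1) nb lsp_zero by metis
  have H: "hinner W U \<noteq> 0" using orth_bot[OF r(2) r(1)] nb by blast
  obtain c wp where nf1: "W = c *s U + wp" "hinner wp U = 0"
    "Re (hinner wp wp) = Tv U W * (cmod c ^ 2 * Re (hinner U U))" "c \<noteq> 0"
    using nf[OF U0 H] by blast
  define s0 where "s0 = Tv U W"
  show ?thesis
  proof (cases "s0 > 0")
    case True
    define N where "N = nat \<lceil>40 / s0^2\<rceil>"
    have "real N \<ge> 40 / s0^2" unfolding N_def by linarith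
    then have "real N * s0^2 \<ge> 40" using True by (simp add: field_simps)
    then have N10: "s0 + real N * s0^2/4 \<ge> 10" using True by simp
    obtain U' W' where "rel (lsp U') x" "rel (lsp W') x" "Tv U' W' \<ge> s0 + real N * s0^2/4"
      using iter[OF card r s0_def[symmetric] True] by blast
    then have "rel botS x" using final[OF card, of U' x W' "Tv U' W'"] N10 by simp
    then show ?thesis using nb by simp
  next
    case False
    have "Re (hinner U U) > 0" unfolding Re_hself using U0 by simp
    moreover have "cmod c ^ 2 > 0" using nf1(4) by simp
    ultimately have "Re (hinner wp wp) \<le> 0" using nf1(3) False unfolding s0_def
      by (simp add: mult_nonpos_nonneg)
    then have "wp = 0" unfolding Re_hself by simp
    then have "W = c *s U" using nf1(1) by simp
    then show ?thesis using lsp_scale[OF nf1(4), of U] by simp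
  qed
qed

end



lemma sasaki_lsp:
  assumes q: "csubspace q" and y: "y \<in> q" and z: "\<And>w. w \<in> q \<Longrightarrow> hinner z w = 0" and v: "v = y + z"
  shows "sasaki (lsp v) q = lsp y"
proof
  have zo: "z \<in> ortho q" unfolding ortho_def using z by blast
  show "lsp y \<subseteq> sasaki (lsp v) q"
  proof
    fix w assume "w \<in> lsp y"
    then obtain c where w: "w = c *s y" unfolding lsp_def by blast
    have "w \<in> q" using w csubspace_scale[OF q y] by simp
    moreover have "(- c) *s z \<in> ortho q" using csubspace_scale[OF csubspace_ortho zo] by blast
    moreover have "c *s v \<in> lsp v" unfolding lsp_def by blast
    moreover have "w = (- c) *s z + c *s v" unfolding w v by (simp add: vec_eq_iff algebra_simps)
    ultimately show "w \<in> sasaki (lsp v) q" unfolding sasaki_def ssum_def by blast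
  qed
  show "sasaki (lsp v) q \<subseteq> lsp y"
  proof
    fix w assume "w \<in> sasaki (lsp v) q"
    then obtain a c where w: "w \<in> q" "w = a + c *s v" "a \<in> ortho q"
      unfolding sasaki_def ssum_def lsp_def by blast
    define r where "r = w - c *s y"
    have rq: "r \<in> q" unfolding r_def using csubspace_diff[OF q w(1) csubspace_scale[OF q y]] .
    have "r = a + c *s z" unfolding r_def w(2) v by (simp add: vec_eq_iff algebra_simps)
    moreover have "a + c *s z \<in> ortho q"
      using csubspace_add[OF csubspace_ortho w(3) csubspace_scale[OF csubspace_ortho zo]] .
    ultimately have "hinner r r = 0" using rq unfolding ortho_def by blast
    then have "r = 0" by (simp add: hinner_self_eq_0)
    then have "w = c *s y" unfolding r_def by simp
    then show "w \<in> lsp y" unfolding lsp_def by blast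
  qed
qed

lemma hinner_axis: "hinner v (axis j 1) = v $ j"
  unfolding hinner_def axis_def by (simp add: if_distrib cong: if_cong)

definition Kset :: "'n::finite set \<Rightarrow> 'n cvec set" where
  "Kset S = {v. \<forall>i\<in>S. v $ i = 0}"

lemma csubspace_Kset: "csubspace (Kset S)"
  unfolding csubspace_def Kset_def by auto

lemma Kset_HH: "Kset S \<in> HH" by (simp add: HH_def csubspace_Kset)

lemma Kset_axis: "ortho (lsp (axis j 1)) = Kset {j}"
  unfolding ortho_lsp Kset_def hinner_axis by simp

lemma Kset_insert: "Kset S \<inter> Kset {j} = Kset (insert j S)"
  unfolding Kset_def by auto

lemma Kset_empty: "Kset {} = topS" unfolding Kset_def topS_def by simp
lemma Kset_UNIV: "Kset UNIV = botS" unfolding Kset_def botS_def by (auto simp: vec_eq_iff)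

lemma Kset_compat:
  fixes S :: "'n::finite set"
  shows "compatible (Kset S) (Kset {j})"
  unfolding compatible_def
proof
  show "ssum (Kset S \<inter> Kset {j}) (Kset S \<inter> ortho (Kset {j})) \<subseteq> Kset S"
    unfolding ssum_def using csubspace_add[OF csubspace_Kset] by blast
  show "Kset S \<subseteq> ssum (Kset S \<inter> Kset {j}) (Kset S \<inter> ortho (Kset {j}))"
  proof
    fix v assume v: "v \<in> Kset S"
    define b where "b = (v $ j) *s axis j (1::complex)"
    define a where "a = v - b"
    have "a \<in> Kset S \<inter> Kset {j}" using v unfolding a_def b_def Kset_def axis_def by auto
    moreover have "b \<in> Kset S" using v unfolding b_def Kset_def axis_def by auto
    moreover have "b \<in> ortho (Kset {j})" unfolding b_def ortho_def Kset_def
    proof (safe)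
      fix w :: "'n cvec" assume "\<forall>i\<in>{j}. w $ i = 0"
      then have "hinner (axis j 1) w = 0" using hinner_sym[of w "axis j 1"] hinner_axis[of w j] by simp
      then show "hinner (v $ j *s axis j 1) w = 0" by (simp add: hinner_scale_left)
    qed
    moreover have "v = a + b" unfolding a_def by simp
    ultimately show "v \<in> ssum (Kset S \<inter> Kset {j}) (Kset S \<inter> ortho (Kset {j}))"
      unfolding ssum_def by blast
  qed
qed

definition Good_pre :: "('n::finite cvec set \<Rightarrow> 'a \<Rightarrow> bool) \<Rightarrow> 'a \<Rightarrow> 'n cvec set \<Rightarrow> bool" where
  "Good_pre rel m X \<longleftrightarrow> (\<exists>v. X = lsp v \<and> (v = 0 \<longrightarrow> rel botS m) \<and> (v \<noteq> 0 \<longrightarrow> rel (lsp v) m \<and> \<not> rel botS m))"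

context pqm
begin

abbreviation "Good \<equiv> Good_pre rel"

lemma claimD:
  assumes card: "CARD('n) \<ge> 3" and nb: "\<not> rel botS x" and r: "rel (lsp v) x"
    and p: "p \<in> HH" "rel p x"
  shows "v \<in> p"
proof -
  have ps: "csubspace p" using p(1) by (simp add: HH_def)
  obtain y z where y: "y \<in> p" and z: "\<And>w. w \<in> p \<Longrightarrow> hinner z w = 0" and v: "v = y + z"
    using decomp[OF ps] by blast
  show ?thesis
  proof (cases "z = 0")
    case True then show ?thesis using v y by simp
  next
    case False
    define q where "q = lsp z"
    have "sasaki p q \<subseteq> botS"
    proof
      fix w :: "'n cvec" assume "w \<in> sasaki p q"
      then obtain c a b where w: "w = c *s z" "w = a + b" "a \<in> ortho q" "b \<in> p"
        unfolding sasaki_def ssum_def q_def lsp_def by blast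
      have "hinner a z = 0" using w(3) lsp_self[of z] unfolding ortho_def q_def by blast
      moreover have "hinner b z = 0" using z[OF w(4)] hinner_sym[of b z] by simp
      ultimately have "hinner w z = 0" using w(2) by (simp add: hinner_simps)
      then have "c * hinner z z = 0" using w(1) by (simp add: hinner_simps)
      then have "c = 0" using False by (simp add: hinner_self_eq_0)
      then show "w \<in> botS" using w(1) by (simp add: botS_def)
    qed
    moreover have "rel (sasaki p q) (prj q x)" using pi_i[OF p(1) _ p(2)] unfolding q_def by simp
    ultimately have "rel botS (prj q x)" using up[OF HH_sasaki[OF p(1) lsp_HH[of z]] HH_bot] unfolding q_def by simp
    then have "rel (ortho (lsp z)) x" using pi_bot unfolding q_def by simp
    then have "rel (lsp (hinner z z *s v - hinner v z *s z)) x"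
      using rule'[OF _ r] False by (simp add: hinner_self_eq_0)
    moreover have "hinner v z = hinner z z" unfolding v using z[OF y] hinner_sym[of y z]
      by (simp add: hinner_simps)
    moreover have "hinner z z *s v - hinner z z *s z = hinner z z *s y" unfolding v
      by (simp add: vec_eq_iff algebra_simps)
    ultimately have "rel (lsp (hinner z z *s y)) x" by simp
    then have "lsp v = lsp (hinner z z *s y)" using KS[OF card nb r] by simp
    then have "v \<in> lsp (hinner z z *s y)" using lsp_self by metis
    moreover have "lsp (hinner z z *s y) \<subseteq> p"
      by (rule lsp_subset[OF ps csubspace_scale[OF ps y]])
    ultimately show ?thesis by blast
  qed
qed

end



lemma uimg_lsp: "uimg U (lsp v) = lsp (U *v v)"
proof -
  have e: "\<And>v::'n::finite cvec. {c *s v | c. True} = range (\<lambda>c. c *s v)" by auto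
  show ?thesis unfolding uimg_def lsp_def e image_image by (simp add: vector_scalar_commute)
qed

lemma unitary_inj: "unitary U \<Longrightarrow> U *v v = 0 \<Longrightarrow> v = 0"
  unfolding unitary_def by (metis matrix_vector_mul_assoc matrix_vector_mul_lid matrix_vector_mult_0_right)

lemma uinvimg_bot: "unitary U \<Longrightarrow> uinvimg U botS = botS"
  unfolding uinvimg_def botS_def using unitary_inj by auto

context pqm
begin

lemma Good_rel:
  assumes card: "CARD('n) \<ge> 3" and G: "Good m X" and p: "p \<in> HH"
  shows "rel p m \<longleftrightarrow> X \<subseteq> p"
proof -
  obtain v where X: "X = lsp v" and G0: "v = 0 \<Longrightarrow> rel botS m"
    and G1: "v \<noteq> 0 \<Longrightarrow> rel (lsp v) m \<and> \<not> rel botS m"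
    using G unfolding Good_pre_def by blast
  have ps: "csubspace p" using p by (simp add: HH_def)
  show ?thesis
  proof (cases "v = 0")
    case True
    then have "X = botS" using X lsp_zero by metis
    then have "X \<subseteq> p" using csubspace_0[OF ps] by (simp add: botS_def)
    moreover have "rel p m" using bot_all[OF G0[OF True] p] .
    ultimately show ?thesis by simp
  next
    case False
    show ?thesis
    proof
      assume "rel p m"
      then have "v \<in> p" using claimD[OF card _ _ p(1)] G1[OF False] by blast
      then show "X \<subseteq> p" using X lsp_subset[OF ps] by simp
    next
      assume "X \<subseteq> p"
      then show "rel p m" using up[OF lsp_HH p] G1[OF False] X by blast
    qed
  qed
qed

lemma Good_u:
  assumes G: "Good m X" and U: "unitary U"
  shows "Good (u U m) (V_u U X)"
proof -
  obtain v where X: "X = lsp v" and G0: "v = 0 \<Longrightarrow> rel botS m"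
    and G1: "v \<noteq> 0 \<Longrightarrow> rel (lsp v) m \<and> \<not> rel botS m"
    using G unfolding Good_pre_def by blast
  have VX: "V_u U X = lsp (U *v v)" unfolding V_u_def X uimg_lsp ..
  show ?thesis
  proof (cases "v = 0")
    case True
    have "rel (lsp 0) m" using G0[OF True] lsp_zero by metis
    then have "rel (uimg U (lsp 0)) (u U m)" using u_i[OF lsp_HH U] by blast
    moreover have "uimg U (lsp 0) = botS" using uimg_lsp[of U 0] lsp_zero by simp
    ultimately have "rel botS (u U m)" by simp
    then show ?thesis unfolding Good_pre_def VX using True by auto
  next
    case False
    have "U *v v \<noteq> 0" using unitary_inj[OF U] False by blast
    moreover have "rel (lsp (U *v v)) (u U m)" using u_i[OF lsp_HH U] G1[OF False] uimg_lsp by metis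
    moreover have "\<not> rel botS (u U m)"
    proof
      assume "rel botS (u U m)"
      then have "rel (uinvimg U botS) m" using u_e[OF HH_bot U] by blast
      then show False using uinvimg_bot[OF U] G1[OF False] by simp
    qed
    ultimately show ?thesis unfolding Good_pre_def VX by blast
  qed
qed

lemma Good_pi:
  assumes card: "CARD('n) \<ge> 3" and G: "Good m X" and q: "q \<in> HH"
  shows "Good (prj q m) (V_pi q X)"
proof -
  obtain v where X: "X = lsp v" and G0: "v = 0 \<Longrightarrow> rel botS m"
    and G1: "v \<noteq> 0 \<Longrightarrow> rel (lsp v) m \<and> \<not> rel botS m"
    using G unfolding Good_pre_def by blast
  have qs: "csubspace q" using q by (simp add: HH_def)
  obtain y z where y: "y \<in> q" and z: "\<And>w. w \<in> q \<Longrightarrow> hinner z w = 0" and v: "v = y + z"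
    using decomp[OF qs] by blast
  have VX: "V_pi q X = lsp y" unfolding V_pi_def X using sasaki_lsp[OF qs y z v] .
  have R: "rel (lsp y) (prj q m) \<or> v \<noteq> 0"
  proof (cases "v = 0")
    case True
    have "rel (lsp v) m" using G0[OF True] lsp_zero True by metis
    then have "rel (sasaki (lsp v) q) (prj q m)" using pi_i[OF lsp_HH q] by blast
    then show ?thesis using sasaki_lsp[OF qs y z v] by simp
  qed simp
  have R2: "v \<noteq> 0 \<Longrightarrow> rel (lsp y) (prj q m)"
    using pi_i[OF lsp_HH q] G1 sasaki_lsp[OF qs y z v] by metis
  have R3: "rel (lsp y) (prj q m)" using R R2 by blast
  show ?thesis
  proof (cases "y = 0")
    case True
    then show ?thesis unfolding Good_pre_def VX using R3 lsp_zero by auto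
  next
    case False
    then have v0: "v \<noteq> 0"
    proof -
      have "v = 0 \<Longrightarrow> False"
      proof -
        assume "v = 0"
        then have "y = - z" using v by (simp add: eq_neg_iff_add_eq_0)
        then have "hinner y y = - hinner z y" by (simp add: hinner_simps)
        then have "hinner y y = 0" using z[OF y] by simp
        then show False using False by (simp add: hinner_self_eq_0)
      qed
      then show ?thesis by blast
    qed
    have "\<not> rel botS (prj q m)"
    proof
      assume "rel botS (prj q m)"
      then have "rel (ortho q) m" using pi_bot[OF q] by blast
      then have "v \<in> ortho q" using claimD[OF card _ _ HH_ortho] G1[OF v0] by blast
      then have "hinner v y = 0" using y unfolding ortho_def by blast
      moreover have "hinner v y = hinner y y" unfolding v using z[OF y] by (simp add: hinner_simps)
      ultimately show False using False by (simp add: hinner_self_eq_0)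
    qed
    then show ?thesis unfolding Good_pre_def VX using R3 False by blast
  qed
qed

lemma Good_eval:
  assumes card: "CARD('n) \<ge> 3"
  shows "wf_trm t \<Longrightarrow> Good m X \<Longrightarrow> Good (eval u prj t m) (eval V_u V_pi t X)"
proof (induction t)
  case Var then show ?case by simp
next
  case (U_app U t) then show ?case using Good_u by simp
next
  case (Pi_app q t) then show ?case using Good_pi[OF card] by simp
qed

lemma Good_move:
  assumes card: "CARD('n) \<ge> 3" and G: "Good m (lsp a)" and ab: "hinner a b \<noteq> 0"
  shows "Good (prj (lsp b) m) (lsp b)"
proof -
  have b0: "b \<noteq> 0" using ab by auto
  define y where "y = (hinner a b / hinner b b) *s b"
  define z where "z = a - y"
  have "y \<in> lsp b" unfolding y_def lsp_def by blast
  moreover have "hinner z w = 0" if wb: "w \<in> lsp b" for w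
  proof -
    obtain c where w: "w = c *s b" using wb unfolding lsp_def by blast
    show ?thesis unfolding w z_def y_def using b0 by (simp add: hinner_simps hinner_self_eq_0)
  qed
  moreover have "a = y + z" unfolding z_def by simp
  ultimately have "sasaki (lsp a) (lsp b) = lsp y" using sasaki_lsp[OF csubspace_lsp] by blast
  also have "\<dots> = lsp b"
  proof -
    have "hinner a b / hinner b b \<noteq> 0" using ab b0 by (simp add: hinner_self_eq_0)
    then show ?thesis unfolding y_def by (rule lsp_scale)
  qed
  finally show ?thesis using Good_pi[OF card G lsp_HH] unfolding V_pi_def by metis
qed

lemma Good_start:
  assumes card: "CARD('n) \<ge> 3"
  shows "\<exists>m. Good m (lsp v0)"
proof (cases "v0 = 0")
  case True
  obtain m0 where "\<not> rel botS m0" using ex_nonbot by blast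
  have "rel (sasaki topS botS) (prj botS m0)" using pi_i[OF HH_top HH_bot top] .
  moreover have "sasaki topS botS \<subseteq> botS" unfolding sasaki_def by blast
  ultimately have "rel botS (prj botS m0)" using up[OF HH_sasaki[OF HH_top HH_bot] HH_bot] by blast
  then show ?thesis unfolding Good_pre_def using True by blast
next
  case False
  obtain m0 where nb: "\<not> rel botS m0" using ex_nonbot by blast
  have "\<exists>i. \<not> rel botS (prj (lsp (axis i 1)) m0)"
  proof (rule ccontr)
    assume "\<not> ?thesis"
    then have K1: "rel (Kset {i}) m0" for i using pi_bot[OF lsp_HH] Kset_axis by metis
    have "finite S \<Longrightarrow> rel (Kset S) m0" for S
    proof (induction S rule: finite_induct)
      case empty show ?case unfolding Kset_empty by (rule top)
    next
      case (insert j S)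
      have "rel (Kset S \<inter> Kset {j}) m0"
        by (rule meet[OF Kset_HH Kset_HH Kset_compat insert.IH K1])
      then show ?case using Kset_insert by metis
    qed
    then have "rel (Kset UNIV) m0" by simp
    then show False using nb Kset_UNIV by metis
  qed
  then obtain i where nb1: "\<not> rel botS (prj (lsp (axis i 1)) m0)" by blast
  define e where "e = axis i (1::complex)"
  define m1 where "m1 = prj (lsp e) m0"
  have "rel (sasaki topS (lsp e)) m1" unfolding m1_def using pi_i[OF HH_top lsp_HH top] .
  moreover have "sasaki topS (lsp e) \<subseteq> lsp e" unfolding sasaki_def by blast
  ultimately have "rel (lsp e) m1" using up[OF HH_sasaki[OF HH_top lsp_HH] lsp_HH] by blast
  moreover have "e \<noteq> 0" unfolding e_def by (simp add: axis_eq_0_iff)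
  ultimately have G1: "Good m1 (lsp e)" unfolding Good_pre_def using nb1 unfolding m1_def e_def by blast
  have ee: "hinner e e = 1" unfolding e_def by (simp add: hinner_axis)
  show ?thesis
  proof (cases "hinner e v0 = 0")
    case False
    then show ?thesis using Good_move[OF card G1] by blast
  next
    case True
    define w where "w = e + v0"
    have "hinner e w = 1" unfolding w_def using ee True by (simp add: hinner_simps)
    then have G2: "Good (prj (lsp w) m1) (lsp w)" using Good_move[OF card G1] by simp
    have "hinner w v0 = hinner v0 v0" unfolding w_def using True by (simp add: hinner_simps)
    then have "hinner w v0 \<noteq> 0" using False by (simp add: hinner_self_eq_0)
    then show ?thesis using Good_move[OF card G2] by blast
  qed
qed

end

theorem mainTheorem14:
  fixes u :: "'n::finite cmat \<Rightarrow> 'a \<Rightarrow> 'a"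
    and prj :: "'n cvec set \<Rightarrow> 'a \<Rightarrow> 'a"
    and rel :: "'n cvec set \<Rightarrow> 'a \<Rightarrow> bool"
    and phi :: "'n lit list"
  assumes "CARD('n) \<ge> 3"
    and "PQM_model u prj rel"
    and "\<forall>l\<in>set phi. wf_lit l"
    and "\<exists>x\<in>VV. sat_lits V_u V_pi V_rel phi x"
  shows "\<exists>x. sat_lits u prj rel phi x"
proof -
  interpret pqm u prj rel by unfold_locales (rule assms(2))
  obtain x0 where x0: "x0 \<in> VV" "sat_lits V_u V_pi V_rel phi x0" using assms(4) by blast
  obtain v0 where v0: "x0 = lsp v0" using x0(1) unfolding VV_def lsp_def by blast
  obtain m where G: "Good m (lsp v0)" using Good_start[OF assms(1)] by blast
  have "sat_lits u prj rel phi m"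
    unfolding sat_lits_def
  proof (intro ballI, clarify)
    fix b t p assume l: "(b, t, p) \<in> set phi"
    then have wf: "wf_trm t" "p \<in> HH" using assms(3) unfolding wf_lit_def by auto
    have "V_rel p (eval V_u V_pi t x0) = b" using x0(2) l unfolding sat_lits_def by blast
    moreover have "Good (eval u prj t m) (eval V_u V_pi t x0)"
      using Good_eval[OF assms(1) wf(1)] G v0 by simp
    ultimately show "rel p (eval u prj t m) = b"
      using Good_rel[OF assms(1) _ wf(2)] unfolding V_rel_def by blast
  qed
  then show ?thesis by blast
qed

end
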